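(* Let $\mathbf{w} = (\omega_k)_{k\geq 1}$ be a bounded sequence of strictly positive real numbers such that $$\sup_{n \geq 1} \inf_{k \geq 1} \prod_{j=1}^n \omega_{k+j} \leq 1.$$ Then there exists $\beta \geq 1$ such that for every $N \in \mathbb{N}$ the set $$\mathcal{A}^{\mathbf{w}}_{N,\beta} = \Big\{ k \in \mathbb{N} : \max_{k < u \leq k+N} \prod_{j=u}^{k+N} \omega_j \leq \beta \Big\}$$ is infinite. *)

theory Defs
  imports Complex_Main
begin

end

theory Submission
  imports Defs
begin

lemma chain:
  fixes w :: "nat \<Rightarrow> real" and N K a :: nat and Mp :: real
  assumes pos: "\<And>k. k\<ge>1 \<Longrightarrow> w k > 0"
    and Mp: "\<And>k. k \<ge> 1 \<Longrightarrow> w k \<le> Mp" "Mp \<ge> 1"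
    and bad: "\<And>v. v \<ge> K \<Longrightarrow> \<exists>u. v - N < u \<and> u \<le> v \<and> (\<Prod>j=u..v. w j) > 2"
    and K: "K \<ge> N + 1" and N: "N \<ge> 1" and a: "a \<ge> K"
  shows "a \<le> v \<Longrightarrow> (\<Prod>j=Suc a..v. w j) \<ge> 2^((v-a) div N) / Mp^N"
proof (induction v rule: less_induct)
  case (less v)
  have MpN: "Mp^N \<ge> 1" using Mp(2) by simp
  show ?case
  proof (cases "v = a")
    case True
    then show ?thesis using MpN by simp
  next
    case False
    with less.prems have va: "a < v" by simp
    obtain u where u: "v - N < u" "u \<le> v" "(\<Prod>j=u..v. w j) > 2" using bad[of v] va a by auto
    show ?thesis
    proof (cases "u > a")
      case True
      have IH: "(\<Prod>j=Suc a..u-1. w j) \<ge> 2^((u-1-a) div N) / Mp^N"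
        using less.IH[of "u-1"] True u by simp
      have split: "{Suc a..v} = {Suc a..u-1} \<union> {u..v}" using True u by auto
      have "(\<Prod>j=Suc a..v. w j) = (\<Prod>j=Suc a..u-1. w j) * (\<Prod>j=u..v. w j)"
        unfolding split by (rule prod.union_disjoint) auto
      also have "\<dots> \<ge> 2^((u-1-a) div N) / Mp^N * 2"
      proof (rule mult_mono)
        show "0 \<le> (\<Prod>j=Suc a..u-1. w j)" using pos by (intro prod_nonneg) (simp add: less_imp_le)
      qed (use IH u(3) in auto)
      finally have A: "(\<Prod>j=Suc a..v. w j) \<ge> 2^((u-1-a) div N + 1) / Mp^N" by (simp add: mult.commute)
      have "v - a \<le> (u-1-a) + N" using u True by linarith
      then have "(v-a) div N \<le> ((u-1-a) + N) div N" by (rule div_le_mono)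
      also have "\<dots> = (u-1-a) div N + 1" using N by simp
      finally have "(2::real)^((v-a) div N) \<le> 2^((u-1-a) div N + 1)" by (rule power_increasing) simp
      then have "(2::real)^((v-a) div N) / Mp^N \<le> 2^((u-1-a) div N + 1) / Mp^N"
        using MpN by (simp add: divide_right_mono)
      then show ?thesis using A by linarith
    next
      case False
      have u1: "u \<ge> 1" using u K a va by linarith
      have split: "{u..v} = {u..a} \<union> {Suc a..v}" using False u va by auto
      have "(\<Prod>j=u..v. w j) = (\<Prod>j=u..a. w j) * (\<Prod>j=Suc a..v. w j)"
        unfolding split by (rule prod.union_disjoint) auto
      moreover have p0: "(\<Prod>j=u..a. w j) > 0" using pos u1 by (intro prod_pos) auto
      moreover have "(\<Prod>j=u..a. w j) \<le> Mp^N"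
        apply (rule prod_le_power)
        using pos Mp u1 u va K a apply (auto intro: less_imp_le)
        done
      moreover have "(\<Prod>j=Suc a..v. w j) > 0" using pos K a by (intro prod_pos) auto
      ultimately have "2 < Mp^N * (\<Prod>j=Suc a..v. w j)"
        using u(3) by (smt (verit) mult_right_mono)
      then have "2 / Mp^N < (\<Prod>j=Suc a..v. w j)" using MpN by (simp add: field_simps)
      moreover have "(v-a) div N = 0" using u False va K a by auto
      moreover have "1 / Mp^N \<le> 2 / Mp^N" using MpN by (simp add: divide_right_mono)
      ultimately show ?thesis by simp
    qed
  qed
qed
theorem lemma2p4:
  fixes w :: "nat \<Rightarrow> real"
  assumes pos: "\<And>k. k \<ge> 1 \<Longrightarrow> w k > 0"
    and bdd: "\<exists>M. \<forall>k\<ge>1. w k \<le> M"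
    and cond: "\<forall>n\<ge>1. (INF k\<in>{1..}. \<Prod>j=1..n. w (k + j)) \<le> 1"
  shows "\<exists>\<beta>\<ge>1. \<forall>N\<ge>1. infinite {k::nat. k \<ge> 1 \<and>
            Max ((\<lambda>u. \<Prod>j=u..k+N. w j) ` {k<..k+N}) \<le> \<beta>}"
proof (rule exI[of _ 2], intro conjI allI impI)
  fix N :: nat assume N: "N \<ge> 1"
  obtain M where M: "\<And>k. k \<ge> 1 \<Longrightarrow> w k \<le> M" using bdd by auto
  define Mp where "Mp = max 1 M"
  have Mp: "\<And>k. k \<ge> 1 \<Longrightarrow> w k \<le> Mp" "Mp \<ge> 1" using M unfolding Mp_def by force+
  have MpN: "Mp^N \<ge> 1" using Mp(2) by simp
  show "infinite {k::nat. k \<ge> 1 \<and> Max ((\<lambda>u. \<Prod>j=u..k+N. w j) ` {k<..k+N}) \<le> 2}"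
    (is "infinite ?S")
  proof
    assume fin: "finite ?S"
    then obtain K1 where K1: "\<And>k. k \<in> ?S \<Longrightarrow> k < K1"
      using finite_nat_set_iff_bounded by auto
    define K where "K = K1 + N + 1"
    have bad: "\<exists>u. v - N < u \<and> u \<le> v \<and> (\<Prod>j=u..v. w j) > 2" if v: "v \<ge> K" for v
    proof -
      define k where "k = v - N"
      have k1: "k \<ge> 1" "k \<ge> K1" and vk: "v = k + N" using v N unfolding k_def K_def by auto
      then have "k \<notin> ?S" using K1 by fastforce
      with k1 have "\<not> Max ((\<lambda>u. \<Prod>j=u..k+N. w j) ` {k<..k+N}) \<le> 2" by auto
      moreover have "{k<..k+N} \<noteq> {}" using N by auto
      ultimately have "\<not> (\<forall>u\<in>{k<..k+N}. (\<Prod>j=u..k+N. w j) \<le> 2)"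
        by (subst (asm) Max_le_iff) auto
      then obtain u where "u \<in> {k<..k+N}" "(\<Prod>j=u..k+N. w j) > 2"
        by (auto simp: not_le)
      then show ?thesis unfolding vk by auto
    qed
    have KN: "K \<ge> N + 1" unfolding K_def by simp
    have ch: "(\<Prod>j=Suc a..v. w j) \<ge> 2^((v-a) div N) / Mp^N" if "a \<ge> K" "a \<le> v" for a v
      using chain[OF pos Mp bad KN N that(1) that(2)] by blast
    define c where "c = Min ((\<lambda>k. \<Prod>j=Suc k..K. w j) ` {1..K})"
    have c0: "c > 0" unfolding c_def
      using KN pos by (subst Min_gr_iff) (auto intro!: prod_pos)
    have c1: "c \<le> 1" unfolding c_def using KN by (intro Min_le_iff[THEN iffD2]) (auto intro!: bexI[of _ K])
    have cK: "c \<le> (\<Prod>j=Suc k..K. w j)" if "k \<ge> 1" "k \<le> K" for k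
      unfolding c_def using that by (intro Min_le) auto
    have low: "(\<Prod>j=Suc k..k+n. w j) \<ge> c * (2^((n-K) div N) / Mp^N)"
      if k: "k \<ge> 1" and n: "n \<ge> K" for k n
    proof (cases "k \<ge> K")
      case True
      have "(2::real)^((n-K) div N) \<le> 2^((k+n-k) div N)"
        by (intro power_increasing div_le_mono) auto
      then have "c * (2^((n-K) div N) / Mp^N) \<le> 1 * (2^((k+n-k) div N) / Mp^N)"
        using c0 c1 MpN by (intro mult_mono divide_right_mono) auto
      also have "\<dots> \<le> (\<Prod>j=Suc k..k+n. w j)" using ch[of k "k+n"] True by simp
      finally show ?thesis .
    next
      case False
      have split: "{Suc k..k+n} = {Suc k..K} \<union> {Suc K..k+n}" using False n by auto
      have eq: "(\<Prod>j=Suc k..k+n. w j) = (\<Prod>j=Suc k..K. w j) * (\<Prod>j=Suc K..k+n. w j)"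
        unfolding split by (rule prod.union_disjoint) auto
      have "(2::real)^((n-K) div N) \<le> 2^((k+n-K) div N)"
        by (intro power_increasing div_le_mono) auto
      then have "2^((n-K) div N) / Mp^N \<le> 2^((k+n-K) div N) / Mp^N"
        using MpN by (intro divide_right_mono) auto
      also have "\<dots> \<le> (\<Prod>j=Suc K..k+n. w j)"
        using ch[of K "k+n"] n by simp
      finally have B: "2^((n-K) div N) / Mp^N \<le> (\<Prod>j=Suc K..k+n. w j)" .
      have "c * (2^((n-K) div N) / Mp^N) \<le> (\<Prod>j=Suc k..K. w j) * (\<Prod>j=Suc K..k+n. w j)"
        using cK[of k] k False c0 B MpN by (intro mult_mono) auto
      then show ?thesis using eq by simp
    qed
    obtain t where t: "Mp^N / c < 2^t" using real_arch_pow[of 2 "Mp^N / c"] by auto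
    define n where "n = K + N * t"
    have n1: "n \<ge> 1" "n \<ge> K" using KN unfolding n_def by auto
    have dv: "(n - K) div N = t" unfolding n_def using N by simp
    have gt: "c * (2^t / Mp^N) > 1" using t c0 MpN by (simp add: field_simps)
    have "c * (2^t / Mp^N) \<le> (INF k\<in>{1..}. \<Prod>j=1..n. w (k + j))"
    proof (rule cINF_greatest)
      fix k :: nat assume "k \<in> {1..}"
      then have k: "k \<ge> 1" by simp
      have "(\<Prod>j=1..n. w (k + j)) = (\<Prod>j=Suc k..k+n. w j)"
        using prod.shift_bounds_cl_nat_ivl[of w 1 k n] by (simp add: add.commute)
      then show "c * (2^t / Mp^N) \<le> (\<Prod>j=1..n. w (k + j))" using low[OF k n1(2)] dv by simp
    qed auto
    with cond n1 gt show False by force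
  qed
qed simp

end
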